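(* Let $\ell$ be an odd prime, $\zeta_\ell$ a primitive $\ell$-th root of unity, $p\in\mathbb{P}$, and $\mathfrak{p}$ a prime ideal of $\mathbb{Z}[\zeta_\ell]$ lying above $p$. For every positive real number $T$, the cardinality of $\{d\in\mathbb{N}: d<T \text{ and } \mathfrak{p}^2\mid d-\zeta_\ell\}$ is at most $T/p^2+1$.
   Context: $\Phi_\ell(X)$ denotes the $\ell$-th cyclotomic polynomial, and $\mathbb{P}$ denotes the set of primes $p$ that divide $\Phi_\ell(d)$ for some $d\in\mathbb{N}$. *)

theory Defs
  imports "HOL-Analysis.Analysis" "HOL-Computational_Algebra.Computational_Algebra"
begin

definition cyclotomic_poly :: "nat \<Rightarrow> complex poly" where
  "cyclotomic_poly n =
     (\<Prod>k\<in>{k. k < n \<and> coprime k n}. [:- exp (2 * pi * \<i> * of_nat k / of_nat n), 1:])"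

definition cyclo_primes :: "nat \<Rightarrow> nat set" where
  "cyclo_primes l = {p. prime p \<and>
     (\<exists>d::nat. \<exists>m::int. poly (cyclotomic_poly l) (of_nat d) = of_int (int p * m))}"

definition primitive_root_unity :: "nat \<Rightarrow> complex \<Rightarrow> bool" where
  "primitive_root_unity l z \<longleftrightarrow> 0 < l \<and> z ^ l = 1 \<and> (\<forall>k. 0 < k \<and> k < l \<longrightarrow> z ^ k \<noteq> 1)"

definition int_adjoin :: "complex \<Rightarrow> complex set" where
  "int_adjoin z = {poly (map_poly of_int f) z | f :: int poly. True}"

definition is_ideal_in :: "complex set \<Rightarrow> complex set \<Rightarrow> bool" where
  "is_ideal_in R I \<longleftrightarrow> I \<subseteq> R \<and> 0 \<in> I \<and>
     (\<forall>x\<in>I. \<forall>y\<in>I. x + y \<in> I) \<and> (\<forall>x\<in>I. - x \<in> I) \<and>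
     (\<forall>r\<in>R. \<forall>x\<in>I. r * x \<in> I)"

definition is_prime_ideal_in :: "complex set \<Rightarrow> complex set \<Rightarrow> bool" where
  "is_prime_ideal_in R I \<longleftrightarrow> is_ideal_in R I \<and> I \<noteq> R \<and>
     (\<forall>a\<in>R. \<forall>b\<in>R. a * b \<in> I \<longrightarrow> a \<in> I \<or> b \<in> I)"

definition cideal_prod :: "complex set \<Rightarrow> complex set \<Rightarrow> complex set" where
  "cideal_prod I J = {(\<Sum>i<n. a i * b i) | (n::nat) a b. (\<forall>i<n. a i \<in> I \<and> b i \<in> J)}"

definition lies_above :: "complex set \<Rightarrow> nat \<Rightarrow> bool" where
  "lies_above I p \<longleftrightarrow> {k::int. of_int k \<in> I} = {k. int p dvd k}"

end

theory Submission
  imports Defs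
begin

lemma synth_int:
  fixes f :: "int poly" and z :: complex
  shows "\<exists>g. poly (map_poly of_int f) z = (z - of_int c) * poly (map_poly of_int g) z + of_int (poly f c)"
proof (induction f rule: pCons_induct)
  case 0
  then show ?case by (intro exI[of _ 0]) simp
next
  case (pCons a f)
  then obtain g where g: "poly (map_poly of_int f) z = (z - of_int c) * poly (map_poly of_int g) z + of_int (poly f c)" by blast
  show ?case
  proof (intro exI[of _ "pCons (poly f c) g"])
    show "poly (map_poly of_int (pCons a f)) z = (z - of_int c) * poly (map_poly of_int (pCons (poly f c) g)) z + of_int (poly (pCons a f) c)"
      by (simp add: map_poly_pCons g algebra_simps)
  qed
qed

lemma count_aux:
  fixes S :: "nat set" and m :: nat and T :: real
  assumes m: "m > 0" and lt: "\<forall>d\<in>S. real d < T"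
    and dv: "\<forall>d\<in>S. \<forall>d'\<in>S. int m dvd int d - int d'" and T: "T > 0"
  shows "real (card S) \<le> T / m + 1"
proof -
  have "S \<subseteq> {..< nat \<lceil>T\<rceil>}"
  proof
    fix d assume "d \<in> S"
    then have "real d < T" using lt by blast
    then have "int d < \<lceil>T\<rceil>" by linarith
    then show "d \<in> {..< nat \<lceil>T\<rceil>}" by simp
  qed
  then have fin: "finite S" using finite_subset by blast
  define h where "h = (\<lambda>d::nat. d div m)"
  have inj: "inj_on h S"
  proof (rule inj_onI)
    fix d d' assume d: "d \<in> S" and d': "d' \<in> S" and e: "h d = h d'"
    have "int d mod int m = int d' mod int m" using dv d d' by (simp add: mod_eq_dvd_iff)
    then have "d mod m = d' mod m" by (metis of_nat_eq_iff zmod_int)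
    then show "d = d'" using e unfolding h_def by (metis div_mult_mod_eq)
  qed
  have sub: "h ` S \<subseteq> {..< nat \<lceil>T / m\<rceil>}"
  proof
    fix k assume "k \<in> h ` S"
    then obtain d where d: "d \<in> S" "k = d div m" unfolding h_def by blast
    have "k * m \<le> d" using d(2) by (simp add: div_times_less_eq_dividend)
    then have "real k * real m \<le> real d" by (metis of_nat_le_iff of_nat_mult)
    also have "\<dots> < T" using lt d by blast
    finally have "real k < T / m" using m by (simp add: field_simps)
    then have "int k < \<lceil>T / m\<rceil>" by linarith
    then show "k \<in> {..< nat \<lceil>T / m\<rceil>}" by simp
  qed
  have "card S = card (h ` S)" using inj by (simp add: card_image)
  also have "\<dots> \<le> nat \<lceil>T / m\<rceil>" using card_mono[OF _ sub] by simp
  finally have "real (card S) \<le> real (nat \<lceil>T / m\<rceil>)" by simp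
  also have "\<dots> = of_int \<lceil>T / m\<rceil>" using T m by simp
  also have "\<dots> \<le> T / m + 1" by (rule of_int_ceiling_le_add_one)
  finally show ?thesis .
qed

lemma ideal_sum:
  fixes n :: nat
  assumes "is_ideal_in R I" and "\<forall>i<n. x i \<in> I"
  shows "(\<Sum>i<n. x i) \<in> I"
  using assms(2)
proof (induction n)
  case 0
  then show ?case using assms unfolding is_ideal_in_def by simp
next
  case (Suc n)
  then show ?case using assms unfolding is_ideal_in_def by simp
qed

theorem lemma2:
  fixes l p :: nat and \<zeta> :: complex and \<pp> :: "complex set" and T :: real
  assumes "prime l" and "odd l"
    and "primitive_root_unity l \<zeta>"
    and "p \<in> cyclo_primes l"
    and "is_prime_ideal_in (int_adjoin \<zeta>) \<pp>"
    and "lies_above \<pp> p"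
    and "T > 0"
  shows "real (card {d::nat. real d < T \<and> of_nat d - \<zeta> \<in> cideal_prod \<pp> \<pp>})
           \<le> T / real p ^ 2 + 1"
proof -
  define S where "S = {d::nat. real d < T \<and> of_nat d - \<zeta> \<in> cideal_prod \<pp> \<pp>}"
  define R where "R = int_adjoin \<zeta>"
  define P where "P = \<pp>"
  have idl: "is_ideal_in R P" and PneR: "P \<noteq> R"
    using assms(5) unfolding R_def P_def is_prime_ideal_in_def by auto
  have PR: "P \<subseteq> R" and Padd: "\<And>x y. x \<in> P \<Longrightarrow> y \<in> P \<Longrightarrow> x + y \<in> P"
    and Pneg: "\<And>x. x \<in> P \<Longrightarrow> - x \<in> P" and Pmul: "\<And>r x. r \<in> R \<Longrightarrow> x \<in> P \<Longrightarrow> r * x \<in> P"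
    and P0: "0 \<in> P"
    using idl unfolding is_ideal_in_def by auto
  have la: "\<And>k. of_int k \<in> P \<longleftrightarrow> int p dvd k"
    using assms(6) unfolding lies_above_def P_def by blast
  have pp: "prime p" using assms(4) unfolding cyclo_primes_def by blast
  have Rpoly: "\<And>g. poly (map_poly of_int g) \<zeta> \<in> R" unfolding R_def int_adjoin_def by blast
  have Rint: "\<And>k. (of_int k :: complex) \<in> R"
  proof -
    fix k :: int
    have "poly (map_poly of_int [:k:]) \<zeta> = (of_int k :: complex)" by (simp add: map_poly_pCons)
    then show "(of_int k :: complex) \<in> R" using Rpoly by metis
  qed
  have Rnat: "\<And>k. (of_nat k :: complex) \<in> R" using Rint[of "int k" for k] by simp
  have RE: "\<And>x. x \<in> R \<Longrightarrow> \<exists>f. x = poly (map_poly of_int f) \<zeta>" unfolding R_def int_adjoin_def by blast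
  have P2P: "cideal_prod P P \<subseteq> P"
  proof
    fix x assume "x \<in> cideal_prod P P"
    then obtain n :: nat and a b :: "nat \<Rightarrow> complex" where x: "x = (\<Sum>i<n. a i * b i)" and ab: "\<forall>i<n. a i \<in> P \<and> b i \<in> P"
      unfolding cideal_prod_def by blast
    have "\<forall>i<n. a i * b i \<in> P" using ab PR Pmul by blast
    then show "x \<in> P" unfolding x by (rule ideal_sum[OF idl])
  qed
  show ?thesis
  proof (cases "S = {}")
    case True
    have "T / real p ^ 2 \<ge> 0" using assms(7) by (intro divide_nonneg_nonneg) auto
    moreover have "card {d::nat. real d < T \<and> of_nat d - \<zeta> \<in> cideal_prod \<pp> \<pp>} = 0"
      using True unfolding S_def by (metis card.empty)
    ultimately show ?thesis by simp
  next
    case False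
    then obtain d0 where d0: "d0 \<in> S" by blast
    define v where "v = \<zeta> - of_nat d0"
    have vP: "v \<in> P"
    proof -
      have "of_nat d0 - \<zeta> \<in> P" using d0 P2P unfolding S_def P_def by blast
      from Pneg[OF this] show ?thesis unfolding v_def by simp
    qed
    have vR: "v \<in> R" using vP PR by blast
    have v0: "v \<noteq> 0"
    proof
      assume "v = 0"
      then have z: "\<zeta> = of_nat d0" unfolding v_def by simp
      have l: "0 < l" "\<zeta> ^ l = 1" "\<And>k. 0 < k \<Longrightarrow> k < l \<Longrightarrow> \<zeta> ^ k \<noteq> 1"
        using assms(3) unfolding primitive_root_unity_def by auto
      have "(of_nat (d0 ^ l) :: complex) = of_nat 1" using l(2) z by simp
      then have "d0 ^ l = 1" by (metis of_nat_eq_iff)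
      then have "d0 = 1" using l(1) by simp
      moreover have "1 < l" using assms(1) prime_gt_1_nat by blast
      ultimately show False using l(3)[of 1] z by simp
    qed
    have p0: "(of_nat p :: complex) \<noteq> 0" using pp by (simp add: prime_gt_0_nat)
    have pP: "(of_nat p :: complex) \<in> P" using la[of "int p"] by simp
    have pR: "(of_nat p :: complex) \<in> R" by (rule Rnat)
    have decomp: "\<And>x. x \<in> P \<Longrightarrow> \<exists>r\<in>R. \<exists>s\<in>R. x = of_nat p * r + v * s"
    proof -
      fix x assume xP: "x \<in> P"
      then obtain f where f: "x = poly (map_poly of_int f) \<zeta>" using RE PR by blast
      obtain g where g: "poly (map_poly of_int f) \<zeta> = (\<zeta> - of_int (int d0)) * poly (map_poly of_int g) \<zeta> + of_int (poly f (int d0))"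
        using synth_int by blast
      define G where "G = poly (map_poly of_int g) \<zeta>"
      have GR: "G \<in> R" unfolding G_def by (rule Rpoly)
      have x2: "x = v * G + of_int (poly f (int d0))" using f g unfolding v_def G_def by simp
      have "v * G \<in> P" using Pmul[OF GR vP] by (simp add: mult.commute)
      then have "x + - (v * G) \<in> P" using Padd Pneg xP by blast
      then have "of_int (poly f (int d0)) \<in> P" using x2 by simp
      then obtain k where k: "poly f (int d0) = int p * k" using la by blast
      have "x = of_nat p * of_int k + v * G" using x2 k by simp
      then show "\<exists>r\<in>R. \<exists>s\<in>R. x = of_nat p * r + v * s" using GR Rint by blast
    qed
    define Q where "Q = {of_nat p * \<alpha> + v * \<beta> | \<alpha> \<beta>. \<alpha> \<in> P \<and> \<beta> \<in> P}"
    have P2Q: "cideal_prod P P \<subseteq> Q"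
    proof
      fix x assume "x \<in> cideal_prod P P"
      then obtain n :: nat and a b :: "nat \<Rightarrow> complex" where x: "x = (\<Sum>i<n. a i * b i)" and ab: "\<forall>i<n. a i \<in> P \<and> b i \<in> P"
        unfolding cideal_prod_def by blast
      have "\<forall>i. \<exists>rs. i < n \<longrightarrow> (fst rs \<in> R \<and> snd rs \<in> R \<and> a i = of_nat p * fst rs + v * snd rs)"
      proof
        fix i
        show "\<exists>rs. i < n \<longrightarrow> (fst rs \<in> R \<and> snd rs \<in> R \<and> a i = of_nat p * fst rs + v * snd rs)"
        proof (cases "i < n")
          case True
          then have "a i \<in> P" using ab by blast
          then obtain r s where "r \<in> R" "s \<in> R" "a i = of_nat p * r + v * s" using decomp by blast
          then show ?thesis by (intro exI[of _ "(r, s)"]) simp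
        next
          case False
          then show ?thesis by simp
        qed
      qed
      from choice[OF this] obtain F where F: "\<forall>i. i < n \<longrightarrow> (fst (F i) \<in> R \<and> snd (F i) \<in> R \<and> a i = of_nat p * fst (F i) + v * snd (F i))"
        by blast
      define \<alpha> where "\<alpha> = (\<Sum>i<n. fst (F i) * b i)"
      define \<beta> where "\<beta> = (\<Sum>i<n. snd (F i) * b i)"
      have "\<forall>i<n. fst (F i) * b i \<in> P" using F ab by (auto intro: Pmul)
      then have aP: "\<alpha> \<in> P" unfolding \<alpha>_def by (rule ideal_sum[OF idl])
      have "\<forall>i<n. snd (F i) * b i \<in> P" using F ab by (auto intro: Pmul)
      then have bP: "\<beta> \<in> P" unfolding \<beta>_def by (rule ideal_sum[OF idl])
      have "x = of_nat p * \<alpha> + v * \<beta>"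
      proof -
        have "x = (\<Sum>i<n. (of_nat p * fst (F i) + v * snd (F i)) * b i)"
          unfolding x using F by (intro sum.cong) auto
        also have "\<dots> = of_nat p * \<alpha> + v * \<beta>"
          unfolding \<alpha>_def \<beta>_def by (simp add: algebra_simps sum.distrib sum_distrib_left)
        finally show ?thesis .
      qed
      then show "x \<in> Q" unfolding Q_def using aP bP by blast
    qed
    have Qadd: "\<And>x y. x \<in> Q \<Longrightarrow> y \<in> Q \<Longrightarrow> x + y \<in> Q"
    proof -
      fix x y assume "x \<in> Q" "y \<in> Q"
      then obtain a1 b1 a2 b2 where "x = of_nat p * a1 + v * b1" "y = of_nat p * a2 + v * b2"
        "a1 \<in> P" "b1 \<in> P" "a2 \<in> P" "b2 \<in> P" unfolding Q_def by blast
      moreover have "x + y = of_nat p * (a1 + a2) + v * (b1 + b2)"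
        using calculation by (simp add: algebra_simps)
      ultimately show "x + y \<in> Q" unfolding Q_def using Padd by blast
    qed
    have Qneg: "\<And>x. x \<in> Q \<Longrightarrow> - x \<in> Q"
    proof -
      fix x assume "x \<in> Q"
      then obtain a1 b1 where "x = of_nat p * a1 + v * b1" "a1 \<in> P" "b1 \<in> P" unfolding Q_def by blast
      moreover have "- x = of_nat p * (- a1) + v * (- b1)"
        using calculation by (simp add: algebra_simps)
      ultimately show "- x \<in> Q" unfolding Q_def using Pneg by blast
    qed
    have Qmul: "\<And>r x. r \<in> R \<Longrightarrow> x \<in> Q \<Longrightarrow> r * x \<in> Q"
    proof -
      fix r x assume r: "r \<in> R" and "x \<in> Q"
      then obtain a1 b1 where "x = of_nat p * a1 + v * b1" "a1 \<in> P" "b1 \<in> P" unfolding Q_def by blast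
      moreover have "r * x = of_nat p * (r * a1) + v * (r * b1)"
        using calculation by (simp add: algebra_simps)
      ultimately show "r * x \<in> Q" unfolding Q_def using Pmul r by blast
    qed
    have QP: "Q \<subseteq> P"
    proof
      fix x assume "x \<in> Q"
      then obtain a1 b1 where x: "x = of_nat p * a1 + v * b1" "a1 \<in> P" "b1 \<in> P" unfolding Q_def by blast
      have "of_nat p * a1 \<in> P" using Pmul[OF pR x(2)] .
      moreover have "v * b1 \<in> P" using Pmul[OF vR x(3)] .
      ultimately show "x \<in> P" unfolding x(1) by (rule Padd)
    qed
    have pQ: "\<not> (of_nat p :: complex) \<in> Q"
    proof
      assume "(of_nat p :: complex) \<in> Q"
      then obtain a1 b1 where e1: "of_nat p = of_nat p * a1 + v * b1" "a1 \<in> P" "b1 \<in> P" unfolding Q_def by blast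
      have "v \<in> Q"
      proof -
        have "of_nat d0 - \<zeta> \<in> Q" using d0 P2Q unfolding S_def P_def by blast
        from Qneg[OF this] show ?thesis unfolding v_def by simp
      qed
      then obtain a2 b2 where e2: "v = of_nat p * a2 + v * b2" "a2 \<in> P" "b2 \<in> P" unfolding Q_def by blast
      have h1: "(1 - a1) * of_nat p = v * b1" using e1(1) by (simp add: algebra_simps)
      have h2: "(1 - b2) * v = of_nat p * a2" using e2(1) by (simp add: algebra_simps)
      have "((1 - a1) * (1 - b2)) * (of_nat p * v) = (a2 * b1) * (of_nat p * v)"
      proof -
        have "((1 - a1) * (1 - b2)) * (of_nat p * v) = ((1 - a1) * of_nat p) * ((1 - b2) * v)" by (simp add: algebra_simps)
        also have "\<dots> = (v * b1) * (of_nat p * a2)" using h1 h2 by simp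
        finally show ?thesis by (simp add: algebra_simps)
      qed
      then have "(1 - a1) * (1 - b2) = a2 * b1" using p0 v0 by simp
      then have one: "1 = a1 + b2 + - (a1 * b2) + a2 * b1" by (simp add: algebra_simps)
      have "a1 * b2 \<in> P" using Pmul PR e1(2) e2(3) by blast
      moreover have "a2 * b1 \<in> P" using Pmul PR e1(3) e2(2) by blast
      ultimately have "a1 + b2 + - (a1 * b2) + a2 * b1 \<in> P"
        by (intro Padd Pneg e1(2) e2(3))
      then have one1: "(1::complex) \<in> P" by (simp only: one[symmetric])
      have "R \<subseteq> P"
      proof
        fix r assume "r \<in> R"
        from Pmul[OF this one1] show "r \<in> P" by simp
      qed
      then show False using PR PneR by blast
    qed
    have key: "\<And>n. of_int n \<in> Q \<Longrightarrow> int p ^ 2 dvd n"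
    proof (rule ccontr)
      fix n assume nQ: "of_int n \<in> Q" and nd: "\<not> int p ^ 2 dvd n"
      have "int p dvd n" using la nQ QP by blast
      then obtain m where m: "n = int p * m" by blast
      have "\<not> int p dvd m" using nd m by (auto simp: power2_eq_square)
      then have "coprime (int p) m" using pp by (simp add: prime_imp_coprime)
      then have g1: "gcd (int p) m = 1" by (simp add: coprime_iff_gcd_eq_1)
      obtain a b where "a * int p + b * m = gcd (int p) m" using bezout_int by blast
      then have ab: "a * int p + b * m = 1" using g1 by simp
      have "(of_nat p :: complex) = of_int b * of_int n + of_int a * (of_nat p * of_nat p)"
      proof -
        have "int p = b * n + a * (int p * int p)" 
        proof -
          have "int p = int p * (a * int p + b * m)" using ab by simp
          then show ?thesis by (simp add: m algebra_simps)
        qed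
        then have "(of_int (int p) :: complex) = of_int (b * n + a * (int p * int p))" by simp
        then show ?thesis by simp
      qed
      moreover have "of_int b * of_int n \<in> Q" using Qmul Rint nQ by blast
      moreover have "of_int a * (of_nat p * of_nat p) \<in> Q"
      proof -
        have "of_nat p * of_nat p \<in> Q" unfolding Q_def using pP P0 by force
        then show ?thesis using Qmul Rint by blast
      qed
      ultimately have "(of_nat p :: complex) \<in> Q" using Qadd[of "of_int b * of_int n" "of_int a * (of_nat p * of_nat p)"] by simp
      then show False using pQ by blast
    qed
    have "\<forall>d\<in>S. \<forall>d'\<in>S. int (p ^ 2) dvd int d - int d'"
    proof (intro ballI)
      fix d d' assume "d \<in> S" "d' \<in> S"
      then have "of_nat d - \<zeta> \<in> Q" "of_nat d' - \<zeta> \<in> Q" using P2Q unfolding S_def P_def by blast+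
      then have "(of_nat d - \<zeta>) + - (of_nat d' - \<zeta>) \<in> Q" using Qadd Qneg by blast
      then have "of_int (int d - int d') \<in> Q" by simp
      then show "int (p ^ 2) dvd int d - int d'" using key by simp
    qed
    moreover have "\<forall>d\<in>S. real d < T" unfolding S_def by blast
    moreover have "p ^ 2 > 0" using pp by (simp add: prime_gt_0_nat)
    ultimately have "real (card S) \<le> T / real (p ^ 2) + 1" using count_aux assms(7) by blast
    then show ?thesis unfolding S_def by simp
  qed
qed

end
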